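(* Let $L$ be a multisorted algebra in the quantifier-free signature satisfying axioms (1), (2), (3), (5), (6), and let $F$ be a prime filter on sort $n$ of $L$. Let $F_1,\dots,F_n$ be distinct symbols and $W=\{F_1,\dots,F_n\}$. Define $\varphi\colon L\to A(W)$ on each sort $k$ by: for each substitution $\alpha\colon k\to n$, $\alpha^{\mathrm{tuple}}(F_1,\dots,F_n)\in\varphi(r)$ if and only if $\alpha(r)\in F$. Then $\varphi$ is a morphism of quantifier-free algebras.
   Context: Signature. There is a sort $n$ for each natural number $n\ge 0$. For every function $\alpha\colon\{1,\dots,n\}\to\{1,\dots,k\}$ there is a unary function symbol ("substitution") $\alpha\colon n\to k$ (argument of sort $n$, value of sort $k$). For each sort there are constants $0,1$, binary operations $\vee,\wedge$, and unary $\neg$ (the quantifier-free signature). For substitutions $\alpha\colon k\to n$, $\beta\colon n\to m$, $\beta\circ\alpha\colon k\to m$ is the substitution symbol of the composite function. For a set $W$: $\alpha^{\mathrm{tuple}}(x_1,\dots,x_k)=(x_{\alpha(1)},\dots,x_{\alpha(n)})$, $\alpha^{\mathrm{relation}}(r)=\{\bar x\in W^k:\alpha^{\mathrm{tuple}}(\bar x)\in r\}$. The quantifier-free algebra $A(W)$ interprets sort $n$ as $\mathcal P(W^n)$, $\alpha$ as $\alpha^{\mathrm{relation}}$, and $0,1,\vee,\wedge,\neg$ as $\emptyset,W^n,\cup,\cap$, complement. Since the $F_i$ are distinct, every tuple from $W$ of length $k$ equals $\alpha^{\mathrm{tuple}}(F_1,\dots,F_n)$ for exactly one substitution $\alpha\colon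 k\to n$. Axioms: (1) each sort is a bounded distributive lattice under $0,1,\vee,\wedge$; (2) substitutions preserve $0,1,\vee,\wedge$; (3) $(\beta\circ\alpha)(r)=\beta(\alpha(r))$; (5) $\alpha(\neg r)=\neg\alpha(r)$; (6) $r\vee\neg r=1$, $r\wedge\neg r=0$. A prime filter is a proper, nonempty, upward-closed, $\wedge$-closed subset of a sort such that $x\vee y\in F$ implies $x\in F$ or $y\in F$. *)

theory Defs
  imports "HOL-Library.FuncSet"
begin

text \<open>A substitution symbol alpha : n -> k (argument of sort n,
  value of sort k) is given by a function alpha : {1..n} -> {1..k}, represented
  extensionally as an element of {1..n} ->E {1..k}; it is interpreted by sub n k alpha.\<close>

record 'a qf_alg =
  car  :: "nat \<Rightarrow> 'a set"
  zero :: "nat \<Rightarrow> 'a"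
  one  :: "nat \<Rightarrow> 'a"
  join :: "nat \<Rightarrow> 'a \<Rightarrow> 'a \<Rightarrow> 'a"
  meet :: "nat \<Rightarrow> 'a \<Rightarrow> 'a \<Rightarrow> 'a"
  neg  :: "nat \<Rightarrow> 'a \<Rightarrow> 'a"
  sub  :: "nat \<Rightarrow> nat \<Rightarrow> (nat \<Rightarrow> nat) \<Rightarrow> 'a \<Rightarrow> 'a"

definition subst_fun :: "nat \<Rightarrow> nat \<Rightarrow> (nat \<Rightarrow> nat) set" where
  "subst_fun n k = {1..n} \<rightarrow>\<^sub>E {1..k}"

definition qf_closed :: "'a qf_alg \<Rightarrow> bool" where
  "qf_closed L \<longleftrightarrow>
     (\<forall>k. zero L k \<in> car L k \<and> one L k \<in> car L k) \<and>
     (\<forall>k. \<forall>x\<in>car L k. \<forall>y\<in>car L k. join L k x y \<in> car L k \<and> meet L k x y \<in> car L k) \<and>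
     (\<forall>k. \<forall>x\<in>car L k. neg L k x \<in> car L k) \<and>
     (\<forall>n k \<alpha>. \<alpha> \<in> subst_fun n k \<longrightarrow> (\<forall>r\<in>car L n. sub L n k \<alpha> r \<in> car L k))"

definition ax1 :: "'a qf_alg \<Rightarrow> bool" where
  "ax1 L \<longleftrightarrow> (\<forall>k. \<forall>x\<in>car L k. \<forall>y\<in>car L k. \<forall>z\<in>car L k.
      join L k (join L k x y) z = join L k x (join L k y z) \<and>
      meet L k (meet L k x y) z = meet L k x (meet L k y z) \<and>
      join L k x y = join L k y x \<and>
      meet L k x y = meet L k y x \<and>
      join L k x (meet L k x y) = x \<and>
      meet L k x (join L k x y) = x \<and>
      meet L k x (join L k y z) = join L k (meet L k x y) (meet L k x z) \<and>
      join L k x (zero L k) = x \<and>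
      meet L k x (one L k) = x)"

definition ax2 :: "'a qf_alg \<Rightarrow> bool" where
  "ax2 L \<longleftrightarrow> (\<forall>n k \<alpha>. \<alpha> \<in> subst_fun n k \<longrightarrow>
      sub L n k \<alpha> (zero L n) = zero L k \<and>
      sub L n k \<alpha> (one L n) = one L k \<and>
      (\<forall>x\<in>car L n. \<forall>y\<in>car L n.
         sub L n k \<alpha> (join L n x y) = join L k (sub L n k \<alpha> x) (sub L n k \<alpha> y) \<and>
         sub L n k \<alpha> (meet L n x y) = meet L k (sub L n k \<alpha> x) (sub L n k \<alpha> y)))"

definition ax3 :: "'a qf_alg \<Rightarrow> bool" where
  "ax3 L \<longleftrightarrow> (\<forall>k n m \<alpha> \<beta>. \<alpha> \<in> subst_fun k n \<longrightarrow> \<beta> \<in> subst_fun n m \<longrightarrow>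
      (\<forall>r\<in>car L k. sub L k m (compose {1..k} \<beta> \<alpha>) r = sub L n m \<beta> (sub L k n \<alpha> r)))"

definition ax5 :: "'a qf_alg \<Rightarrow> bool" where
  "ax5 L \<longleftrightarrow> (\<forall>n k \<alpha>. \<alpha> \<in> subst_fun n k \<longrightarrow>
      (\<forall>r\<in>car L n. sub L n k \<alpha> (neg L n r) = neg L k (sub L n k \<alpha> r)))"

definition ax6 :: "'a qf_alg \<Rightarrow> bool" where
  "ax6 L \<longleftrightarrow> (\<forall>k. \<forall>r\<in>car L k.
      join L k r (neg L k r) = one L k \<and> meet L k r (neg L k r) = zero L k)"

text \<open>Prime filter on sort n (order: x <= y iff meet x y = x).\<close>
definition prime_filter :: "'a qf_alg \<Rightarrow> nat \<Rightarrow> 'a set \<Rightarrow> bool" where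
  "prime_filter L n P \<longleftrightarrow>
     P \<subseteq> car L n \<and> P \<noteq> car L n \<and> P \<noteq> {} \<and>
     (\<forall>x\<in>P. \<forall>y\<in>car L n. meet L n x y = x \<longrightarrow> y \<in> P) \<and>
     (\<forall>x\<in>P. \<forall>y\<in>P. meet L n x y \<in> P) \<and>
     (\<forall>x\<in>car L n. \<forall>y\<in>car L n. join L n x y \<in> P \<longrightarrow> x \<in> P \<or> y \<in> P)"

definition tuples :: "'w set \<Rightarrow> nat \<Rightarrow> (nat \<Rightarrow> 'w) set" where
  "tuples W n = {1..n} \<rightarrow>\<^sub>E W"

definition tuple_sub :: "nat \<Rightarrow> (nat \<Rightarrow> nat) \<Rightarrow> (nat \<Rightarrow> 'w) \<Rightarrow> (nat \<Rightarrow> 'w)" where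
  "tuple_sub n \<alpha> x = (\<lambda>i\<in>{1..n}. x (\<alpha> i))"

definition A_alg :: "'w set \<Rightarrow> (nat \<Rightarrow> 'w) set qf_alg" where
  "A_alg W = \<lparr> car = (\<lambda>n. Pow (tuples W n)),
               zero = (\<lambda>n. {}),
               one = (\<lambda>n. tuples W n),
               join = (\<lambda>n r s. r \<union> s),
               meet = (\<lambda>n r s. r \<inter> s),
               neg = (\<lambda>n r. tuples W n - r),
               sub = (\<lambda>n k \<alpha> r. {x \<in> tuples W k. tuple_sub n \<alpha> x \<in> r}) \<rparr>"

definition qf_morphism :: "'a qf_alg \<Rightarrow> 'b qf_alg \<Rightarrow> (nat \<Rightarrow> 'a \<Rightarrow> 'b) \<Rightarrow> bool" where
  "qf_morphism L M \<phi> \<longleftrightarrow>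
     (\<forall>k. \<forall>r\<in>car L k. \<phi> k r \<in> car M k) \<and>
     (\<forall>k. \<phi> k (zero L k) = zero M k \<and> \<phi> k (one L k) = one M k) \<and>
     (\<forall>k. \<forall>x\<in>car L k. \<forall>y\<in>car L k.
         \<phi> k (join L k x y) = join M k (\<phi> k x) (\<phi> k y) \<and>
         \<phi> k (meet L k x y) = meet M k (\<phi> k x) (\<phi> k y)) \<and>
     (\<forall>k. \<forall>x\<in>car L k. \<phi> k (neg L k x) = neg M k (\<phi> k x)) \<and>
     (\<forall>n k \<alpha>. \<alpha> \<in> subst_fun n k \<longrightarrow>
         (\<forall>r\<in>car L n. \<phi> k (sub L n k \<alpha> r) = sub M n k \<alpha> (\<phi> n r)))"

text \<open>Since every k-tuple from W is alpha^tuple(F_1..F_n) for exactly one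
  alpha, phi(r) is the set of those tuples for which alpha(r) in P.\<close>
definition phi_map :: "'a qf_alg \<Rightarrow> nat \<Rightarrow> 'a set \<Rightarrow> (nat \<Rightarrow> 'w) \<Rightarrow> nat \<Rightarrow> 'a \<Rightarrow> (nat \<Rightarrow> 'w) set" where
  "phi_map L n P F k r =
     (\<lambda>\<alpha>. tuple_sub k \<alpha> F) ` {\<alpha> \<in> subst_fun k n. sub L k n \<alpha> r \<in> P}"

end

theory Submission
  imports Defs
begin

lemma T_inj:
  assumes "inj_on F {1..n}"
  shows "inj_on (\<lambda>\<alpha>. tuple_sub k \<alpha> F) (subst_fun k n)"
proof (rule inj_onI)
  fix a b assume a: "a \<in> subst_fun k n" and b: "b \<in> subst_fun k n"
    and e: "tuple_sub k a F = tuple_sub k b F"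
  show "a = b"
  proof (rule ext)
    fix i show "a i = b i"
    proof (cases "i \<in> {1..k}")
      case True
      have "F (a i) = F (b i)" using fun_cong[OF e, of i] True by (simp add: tuple_sub_def)
      moreover have "a i \<in> {1..n}" "b i \<in> {1..n}" using a b True by (auto simp: subst_fun_def)
      ultimately show ?thesis using assms by (meson inj_onD)
    next
      case False then show ?thesis using a b by (auto simp: subst_fun_def PiE_def extensional_def)
    qed
  qed
qed

lemma T_image:
  assumes "inj_on F {1..n}"
  shows "(\<lambda>\<alpha>. tuple_sub k \<alpha> F) ` (subst_fun k n) = tuples (F ` {1..n}) k"
proof
  show "(\<lambda>\<alpha>. tuple_sub k \<alpha> F) ` subst_fun k n \<subseteq> tuples (F ` {1..n}) k"
    by (auto simp: subst_fun_def tuples_def tuple_sub_def)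
next
  show "tuples (F ` {1..n}) k \<subseteq> (\<lambda>\<alpha>. tuple_sub k \<alpha> F) ` subst_fun k n"
  proof
    fix t assume t: "t \<in> tuples (F ` {1..n}) k"
    define a where "a = (\<lambda>i\<in>{1..k}. inv_into {1..n} F (t i))"
    have "a \<in> subst_fun k n"
    proof -
      have "\<And>i. i \<in> {1..k} \<Longrightarrow> inv_into {1..n} F (t i) \<in> {1..n}"
        using t by (intro inv_into_into) (auto simp: tuples_def)
      then show ?thesis by (auto simp: a_def subst_fun_def)
    qed
    moreover have "tuple_sub k a F = t"
    proof (rule ext)
      fix i show "tuple_sub k a F i = t i"
      proof (cases "i \<in> {1..k}")
        case True
        then have "t i \<in> F ` {1..n}" using t by (auto simp: tuples_def)
        then show ?thesis using True by (simp add: tuple_sub_def a_def f_inv_into_f)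
      next
        case False
        then show ?thesis using t by (auto simp: tuple_sub_def tuples_def PiE_def extensional_def)
      qed
    qed
    ultimately show "t \<in> (\<lambda>\<alpha>. tuple_sub k \<alpha> F) ` subst_fun k n" by force
  qed
qed

lemma ax1D:
  assumes "ax1 L" "x \<in> car L k" "y \<in> car L k" "z \<in> car L k"
  shows "join L k (join L k x y) z = join L k x (join L k y z)"
      "meet L k (meet L k x y) z = meet L k x (meet L k y z)"
      "join L k x y = join L k y x"
      "meet L k x y = meet L k y x"
      "join L k x (meet L k x y) = x"
      "meet L k x (join L k x y) = x"
      "meet L k x (join L k y z) = join L k (meet L k x y) (meet L k x z)"
      "join L k x (zero L k) = x"
      "meet L k x (one L k) = x"
  using assms unfolding ax1_def by blast+

lemma filter_facts:
  assumes cl: "qf_closed L" and a1: "ax1 L" and a6: "ax6 L" and pf: "prime_filter L n P"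
  shows "zero L n \<notin> P" "one L n \<in> P"
    "\<And>x y. x \<in> car L n \<Longrightarrow> y \<in> car L n \<Longrightarrow> join L n x y \<in> P \<longleftrightarrow> x \<in> P \<or> y \<in> P"
    "\<And>x y. x \<in> car L n \<Longrightarrow> y \<in> car L n \<Longrightarrow> meet L n x y \<in> P \<longleftrightarrow> x \<in> P \<and> y \<in> P"
    "\<And>x. x \<in> car L n \<Longrightarrow> neg L n x \<in> P \<longleftrightarrow> x \<notin> P"
proof -
  have z: "zero L n \<in> car L n" and o: "one L n \<in> car L n" using cl by (auto simp: qf_closed_def)
  have up: "\<And>x y. x \<in> P \<Longrightarrow> y \<in> car L n \<Longrightarrow> meet L n x y = x \<Longrightarrow> y \<in> P"
    using pf by (auto simp: prime_filter_def)
  have sub: "P \<subseteq> car L n" using pf by (auto simp: prime_filter_def)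
  show zP: "zero L n \<notin> P"
  proof
    assume zP: "zero L n \<in> P"
    have "car L n \<subseteq> P"
    proof
      fix y assume y: "y \<in> car L n"
      have "join L n y (zero L n) = y" using ax1D(8)[OF a1 y y y] .
      moreover have "join L n (zero L n) y = join L n y (zero L n)" using ax1D(3)[OF a1 z y y] .
      moreover have "meet L n (zero L n) (join L n (zero L n) y) = zero L n" using ax1D(6)[OF a1 z y y] .
      ultimately have "meet L n (zero L n) y = zero L n" by simp
      then show "y \<in> P" using up zP y by blast
    qed
    then show False using pf sub by (auto simp: prime_filter_def)
  qed
  show oP: "one L n \<in> P"
  proof -
    obtain x where x: "x \<in> P" using pf by (auto simp: prime_filter_def)
    have "meet L n x (one L n) = x" using ax1D[OF a1 _ o o] x sub by blast
    then show ?thesis using up x o by blast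
  qed
  show J: "\<And>x y. x \<in> car L n \<Longrightarrow> y \<in> car L n \<Longrightarrow> join L n x y \<in> P \<longleftrightarrow> x \<in> P \<or> y \<in> P"
  proof -
    fix x y assume x: "x \<in> car L n" and y: "y \<in> car L n"
    have j: "join L n x y \<in> car L n" using cl x y by (simp add: qf_closed_def)
    have "meet L n x (join L n x y) = x" using ax1D(6)[OF a1 x y y] .
    moreover have "meet L n y (join L n y x) = y" using ax1D(6)[OF a1 y x x] .
    moreover have "join L n y x = join L n x y" using ax1D(3)[OF a1 y x x] .
    ultimately have "x \<in> P \<or> y \<in> P \<Longrightarrow> join L n x y \<in> P"
      using up j by metis
    moreover have "join L n x y \<in> P \<Longrightarrow> x \<in> P \<or> y \<in> P"
      using pf x y unfolding prime_filter_def by blast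
    ultimately show "join L n x y \<in> P \<longleftrightarrow> x \<in> P \<or> y \<in> P" by blast
  qed
  show M: "\<And>x y. x \<in> car L n \<Longrightarrow> y \<in> car L n \<Longrightarrow> meet L n x y \<in> P \<longleftrightarrow> x \<in> P \<and> y \<in> P"
  proof -
    fix x y assume x: "x \<in> car L n" and y: "y \<in> car L n"
    have m: "meet L n x y \<in> car L n" using cl x y by (simp add: qf_closed_def)
    have idem: "\<And>u. u \<in> car L n \<Longrightarrow> meet L n u u = u"
    proof -
      fix u assume u: "u \<in> car L n"
      have mu: "meet L n u u \<in> car L n" using cl u by (simp add: qf_closed_def)
      have "join L n u (meet L n u u) = u" using ax1D(5)[OF a1 u u u] .
      moreover have "meet L n u (join L n u (meet L n u u)) = u" using ax1D(6)[OF a1 u mu mu] .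
      ultimately show "meet L n u u = u" by simp
    qed
    have "meet L n (meet L n x y) x = meet L n x y"
    proof -
      have "meet L n (meet L n x y) x = meet L n x (meet L n y x)" using ax1D(2)[OF a1 x y x] .
      also have "\<dots> = meet L n x (meet L n x y)" using ax1D(4)[OF a1 y x x] by (rule arg_cong)
      also have "\<dots> = meet L n (meet L n x x) y" using ax1D(2)[OF a1 x x y] by (rule sym)
      also have "\<dots> = meet L n x y" using idem x by simp
      finally show ?thesis .
    qed
    moreover have "meet L n (meet L n x y) y = meet L n x y"
      using ax1D(2)[OF a1 x y y] idem[OF y] by simp
    ultimately have "meet L n x y \<in> P \<Longrightarrow> x \<in> P \<and> y \<in> P"
      using up m x y by metis
    moreover have "x \<in> P \<and> y \<in> P \<Longrightarrow> meet L n x y \<in> P"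
      using pf unfolding prime_filter_def by blast
    ultimately show "meet L n x y \<in> P \<longleftrightarrow> x \<in> P \<and> y \<in> P" by blast
  qed
  show "\<And>x. x \<in> car L n \<Longrightarrow> neg L n x \<in> P \<longleftrightarrow> x \<notin> P"
  proof -
    fix x assume x: "x \<in> car L n"
    have nx: "neg L n x \<in> car L n" using cl x by (simp add: qf_closed_def)
    have "join L n x (neg L n x) = one L n" "meet L n x (neg L n x) = zero L n"
      using a6 x by (auto simp: ax6_def)
    then show "neg L n x \<in> P \<longleftrightarrow> x \<notin> P" using J[OF x nx] M[OF x nx] oP zP by auto
  qed
qed


lemma tuple_comp:
  assumes "\<alpha> \<in> subst_fun m k"
  shows "tuple_sub m \<alpha> (tuple_sub k \<beta> F) = tuple_sub m (compose {1..m} \<beta> \<alpha>) F"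
proof (rule ext)
  fix i show "tuple_sub m \<alpha> (tuple_sub k \<beta> F) i = tuple_sub m (compose {1..m} \<beta> \<alpha>) F i"
    using assms by (auto simp: tuple_sub_def compose_def subst_fun_def)
qed

lemma compose_subst:
  assumes "\<alpha> \<in> subst_fun m k" "\<beta> \<in> subst_fun k n"
  shows "compose {1..m} \<beta> \<alpha> \<in> subst_fun m n"
  using assms unfolding subst_fun_def by (rule funcset_compose[THEN restrict_PiE[THEN iffD2], unfolded compose_def[symmetric]] | auto simp: compose_def)

theorem lemma4p2:
  fixes L :: "'a qf_alg" and n :: nat and P :: "'a set" and F :: "nat \<Rightarrow> 'w"
  assumes "qf_closed L" and "ax1 L" and "ax2 L" and "ax3 L" and "ax5 L" and "ax6 L"
    and "prime_filter L n P"
    and "inj_on F {1..n}"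
  shows "qf_morphism L (A_alg (F ` {1..n})) (phi_map L n P F)"
proof -
  note cl = assms(1) and a1 = assms(2) and a2 = assms(3) and a3 = assms(4) and a5 = assms(5)
    and a6 = assms(6) and pf = assms(7) and inj = assms(8)
  note ff = filter_facts[OF cl a1 a6 pf]
  define W where "W = F ` {1..n}"
  define T where "T k = (\<lambda>\<alpha>. tuple_sub k \<alpha> F)" for k
  have Tinj: "inj_on (T k) (subst_fun k n)" for k unfolding T_def by (rule T_inj[OF inj])
  have Timg: "T k ` subst_fun k n = tuples W k" for k unfolding T_def W_def by (rule T_image[OF inj])
  have phi: "phi_map L n P F k r = T k ` {\<alpha> \<in> subst_fun k n. sub L k n \<alpha> r \<in> P}" for k r
    unfolding phi_map_def T_def ..
  have memT: "T k \<beta> \<in> T k ` {\<alpha> \<in> subst_fun k n. Q \<alpha>} \<longleftrightarrow> Q \<beta>" if "\<beta> \<in> subst_fun k n" for k \<beta> Q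
    using Tinj[of k] that by (auto dest: inj_onD)
  have subP: "sub L k n \<alpha> r \<in> car L n" if "\<alpha> \<in> subst_fun k n" "r \<in> car L k" for k \<alpha> r
    using cl that unfolding qf_closed_def by blast
  have ax2': "sub L k n \<alpha> (zero L k) = zero L n" "sub L k n \<alpha> (one L k) = one L n"
    if "\<alpha> \<in> subst_fun k n" for k \<alpha> using a2 that unfolding ax2_def by blast+
  have ax2j: "sub L k n \<alpha> (join L k x y) = join L n (sub L k n \<alpha> x) (sub L k n \<alpha> y)"
    "sub L k n \<alpha> (meet L k x y) = meet L n (sub L k n \<alpha> x) (sub L k n \<alpha> y)"
    if "\<alpha> \<in> subst_fun k n" "x \<in> car L k" "y \<in> car L k" for k \<alpha> x y
    using a2 that unfolding ax2_def by blast+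
  have ax5': "sub L k n \<alpha> (neg L k x) = neg L n (sub L k n \<alpha> x)"
    if "\<alpha> \<in> subst_fun k n" "x \<in> car L k" for k \<alpha> x using a5 that unfolding ax5_def by blast
  have ax3': "sub L m n (compose {1..m} \<beta> \<alpha>) r = sub L k n \<beta> (sub L m k \<alpha> r)"
    if "\<alpha> \<in> subst_fun m k" "\<beta> \<in> subst_fun k n" "r \<in> car L m" for m k \<alpha> \<beta> r
    using a3 that unfolding ax3_def by blast
  show ?thesis
    unfolding qf_morphism_def W_def[symmetric]
  proof (intro conjI allI ballI impI)
    fix k r assume "r \<in> car L k"
    show "phi_map L n P F k r \<in> car (A_alg W) k"
      unfolding phi A_alg_def using Timg[of k] by auto
  next
    fix k
    show "phi_map L n P F k (zero L k) = zero (A_alg W) k"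
      unfolding phi A_alg_def using ff(1) ax2' by auto
    show "phi_map L n P F k (one L k) = one (A_alg W) k"
    proof -
      have "{\<alpha> \<in> subst_fun k n. sub L k n \<alpha> (one L k) \<in> P} = subst_fun k n"
        using ff(2) ax2'(2) by auto
      then show ?thesis unfolding phi A_alg_def using Timg[of k] by simp
    qed
  next
    fix k x y assume x: "x \<in> car L k" and y: "y \<in> car L k"
    have "{\<alpha> \<in> subst_fun k n. sub L k n \<alpha> (join L k x y) \<in> P} =
      {\<alpha> \<in> subst_fun k n. sub L k n \<alpha> x \<in> P} \<union> {\<alpha> \<in> subst_fun k n. sub L k n \<alpha> y \<in> P}"
      using ax2j(1)[OF _ x y] ff(3)[OF subP[OF _ x] subP[OF _ y]] by auto
    then show "phi_map L n P F k (join L k x y) =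
      join (A_alg W) k (phi_map L n P F k x) (phi_map L n P F k y)"
      unfolding phi A_alg_def by auto
    have "{\<alpha> \<in> subst_fun k n. sub L k n \<alpha> (meet L k x y) \<in> P} =
      {\<alpha> \<in> subst_fun k n. sub L k n \<alpha> x \<in> P} \<inter> {\<alpha> \<in> subst_fun k n. sub L k n \<alpha> y \<in> P}"
      using ax2j(2)[OF _ x y] ff(4)[OF subP[OF _ x] subP[OF _ y]] by auto
    moreover have "T k ` (A \<inter> B) = T k ` A \<inter> T k ` B" if "A \<subseteq> subst_fun k n" "B \<subseteq> subst_fun k n" for A B
      using inj_on_image_Int[OF Tinj that] .
    ultimately show "phi_map L n P F k (meet L k x y) =
      meet (A_alg W) k (phi_map L n P F k x) (phi_map L n P F k y)"
      unfolding phi A_alg_def by simp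
  next
    fix k x assume x: "x \<in> car L k"
    have "{\<alpha> \<in> subst_fun k n. sub L k n \<alpha> (neg L k x) \<in> P} =
      subst_fun k n - {\<alpha> \<in> subst_fun k n. sub L k n \<alpha> x \<in> P}"
      using ax5'[OF _ x] ff(5)[OF subP[OF _ x]] by auto
    moreover have "T k ` (subst_fun k n - A) = T k ` subst_fun k n - T k ` A" if "A \<subseteq> subst_fun k n" for A
      using inj_on_image_set_diff[OF Tinj _ that] by blast
    ultimately show "phi_map L n P F k (neg L k x) = neg (A_alg W) k (phi_map L n P F k x)"
      unfolding phi A_alg_def using Timg[of k] by simp
  next
    fix m k \<alpha> r assume \<alpha>: "\<alpha> \<in> subst_fun m k" and r: "r \<in> car L m"
    show "phi_map L n P F k (sub L m k \<alpha> r) = sub (A_alg W) m k \<alpha> (phi_map L n P F m r)"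
    proof
      show "phi_map L n P F k (sub L m k \<alpha> r) \<subseteq> sub (A_alg W) m k \<alpha> (phi_map L n P F m r)"
      proof
        fix x assume "x \<in> phi_map L n P F k (sub L m k \<alpha> r)"
        then obtain \<beta> where \<beta>: "\<beta> \<in> subst_fun k n" "sub L k n \<beta> (sub L m k \<alpha> r) \<in> P" and xe: "x = T k \<beta>"
          unfolding phi by auto
        have c: "compose {1..m} \<beta> \<alpha> \<in> subst_fun m n" by (rule compose_subst[OF \<alpha> \<beta>(1)])
        have "tuple_sub m \<alpha> x = T m (compose {1..m} \<beta> \<alpha>)"
          unfolding xe T_def by (rule tuple_comp[OF \<alpha>])
        moreover have "sub L m n (compose {1..m} \<beta> \<alpha>) r \<in> P" using ax3'[OF \<alpha> \<beta>(1) r] \<beta>(2) by simp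
        moreover have "x \<in> tuples W k" using Timg[of k] \<beta>(1) xe by auto
        ultimately show "x \<in> sub (A_alg W) m k \<alpha> (phi_map L n P F m r)"
          unfolding A_alg_def phi using c by auto
      qed
    next
      show "sub (A_alg W) m k \<alpha> (phi_map L n P F m r) \<subseteq> phi_map L n P F k (sub L m k \<alpha> r)"
      proof
        fix x assume "x \<in> sub (A_alg W) m k \<alpha> (phi_map L n P F m r)"
        then have xt: "x \<in> tuples W k" and xin: "tuple_sub m \<alpha> x \<in> T m ` {\<gamma> \<in> subst_fun m n. sub L m n \<gamma> r \<in> P}"
          unfolding A_alg_def phi by auto
        obtain \<beta> where \<beta>: "\<beta> \<in> subst_fun k n" and xe: "x = T k \<beta>" using xt Timg[of k] by auto
        have c: "compose {1..m} \<beta> \<alpha> \<in> subst_fun m n" by (rule compose_subst[OF \<alpha> \<beta>])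
        have "tuple_sub m \<alpha> x = T m (compose {1..m} \<beta> \<alpha>)"
          unfolding xe T_def by (rule tuple_comp[OF \<alpha>])
        with xin memT[OF c] have "sub L m n (compose {1..m} \<beta> \<alpha>) r \<in> P" by simp
        then have "sub L k n \<beta> (sub L m k \<alpha> r) \<in> P" using ax3'[OF \<alpha> \<beta> r] by simp
        then show "x \<in> phi_map L n P F k (sub L m k \<alpha> r)" unfolding phi xe using \<beta> by auto
      qed
    qed
  qed
qed

end
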